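(* Let $\theta^*$ be an optimal solution of the general problem. Then for every pair of jobs $i,j$ there exists a constant $c_{i,j}$ such that $$\frac{s_i'(\theta_i^*(t),t)}{s_j'(\theta_j^*(t),t)}=c_{i,j}$$ for all $t>0$ with $\theta_i^*(t)>0$ and $\theta_j^*(t)>0$.
   Context: General problem. There are $M$ jobs available at time $0$ with sizes $x_i>0$. Let $B(t)>0$ be the total resource available at time $t$, right-continuous in $t$. Each job $i$ has a time-varying speedup function $s_i(\theta,t)$ such that for each fixed $t$: $s_i(0,t)=0$, and $s_i(\cdot,t)$ is strictly increasing, strictly concave and differentiable in $\theta$; the partial derivative $s_i'(\theta,t)=\partial s_i(\theta,t)/\partial\theta$ is continuous in $\theta$; and $s_i$, $s_i'$ are right-continuous in $t$. A schedule consists of nonnegative right-continuous functions $\theta_i(t)$ with $\sum_{i=1}^M\theta_i(t)\le B(t)$ for all $t>0$. The service to job $i$ on $[t_1,t_2]$ is $Q_i(t_1,t_2)=\int_{t_1}^{t_2}s_i(\theta_i(t),t)\,dt$; the completion time $T_i$ satisfies $Q_i(0,T_i)=x_i$, with $\theta_i(t)=0$ for $t>T_i$. The objective is $J=f(T_1,\dots,T_M)$ where $f$ is continuous and strictly increasing in each argument; an optimal solution is a feasible schedule minimizing $J$. *)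

theory Defs
  imports "HOL-Analysis.Analysis"
begin

definition strict_concave_on :: "real set \<Rightarrow> (real \<Rightarrow> real) \<Rightarrow> bool" where
  "strict_concave_on S g \<longleftrightarrow> convex S \<and>
     (\<forall>a\<in>S. \<forall>b\<in>S. a \<noteq> b \<longrightarrow> (\<forall>u. 0 < u \<and> u < 1 \<longrightarrow>
        g (u * a + (1 - u) * b) > u * g a + (1 - u) * g b))"

text \<open>Standing assumptions on the time-varying speedup functions
  (jobs indexed by a finite type 'm, s i th t = speedup of job i with resource th at time t,
  ds i th t = its partial derivative in th).\<close>
definition speedup_ok :: "('m \<Rightarrow> real \<Rightarrow> real \<Rightarrow> real) \<Rightarrow> ('m \<Rightarrow> real \<Rightarrow> real \<Rightarrow> real) \<Rightarrow> bool" where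
  "speedup_ok s ds \<longleftrightarrow> (\<forall>i. \<forall>t\<ge>0.
      s i 0 t = 0 \<and>
      strict_mono_on {0..} (\<lambda>th. s i th t) \<and>
      strict_concave_on {0..} (\<lambda>th. s i th t) \<and>
      (\<forall>th\<ge>0. ((\<lambda>y. s i y t) has_real_derivative ds i th t) (at th within {0..})) \<and>
      continuous_on {0..} (\<lambda>th. ds i th t) \<and>
      (\<forall>th\<ge>0. continuous (at_right t) (\<lambda>u. s i th u) \<and>
                continuous (at_right t) (\<lambda>u. ds i th u)))"

definition service :: "('m \<Rightarrow> real \<Rightarrow> real \<Rightarrow> real) \<Rightarrow> ('m \<Rightarrow> real \<Rightarrow> real) \<Rightarrow> 'm \<Rightarrow> real \<Rightarrow> real \<Rightarrow> real" where
  "service s th i t1 t2 = integral {t1..t2} (\<lambda>t. s i (th i t) t)"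

definition feasible ::
  "(real \<Rightarrow> real) \<Rightarrow> ('m \<Rightarrow> real \<Rightarrow> real \<Rightarrow> real) \<Rightarrow> ('m \<Rightarrow> real) \<Rightarrow>
   ('m::finite \<Rightarrow> real \<Rightarrow> real) \<Rightarrow> real^'m \<Rightarrow> bool" where
  "feasible B s x th T \<longleftrightarrow>
     (\<forall>i. \<forall>t\<ge>0. th i t \<ge> 0 \<and> continuous (at_right t) (th i)) \<and>
     (\<forall>t>0. (\<Sum>i\<in>UNIV. th i t) \<le> B t) \<and>
     (\<forall>i. \<forall>\<tau>\<ge>0. (\<lambda>t. s i (th i t) t) integrable_on {0..\<tau>}) \<and>
     (\<forall>i. T $ i \<ge> 0 \<and> service s th i 0 (T $ i) = x i \<and>
          (\<forall>\<tau>. 0 \<le> \<tau> \<and> \<tau> < T $ i \<longrightarrow> service s th i 0 \<tau> < x i) \<and>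
          (\<forall>t>T $ i. th i t = 0))"

definition optimal ::
  "((real^'m) \<Rightarrow> real) \<Rightarrow> (real \<Rightarrow> real) \<Rightarrow> ('m \<Rightarrow> real \<Rightarrow> real \<Rightarrow> real) \<Rightarrow> ('m \<Rightarrow> real) \<Rightarrow>
   ('m::finite \<Rightarrow> real \<Rightarrow> real) \<Rightarrow> real^'m \<Rightarrow> bool" where
  "optimal f B s x th T \<longleftrightarrow> feasible B s x th T \<and>
     (\<forall>th' T'. feasible B s x th' T' \<longrightarrow> f T \<le> f T')"

end

theory Submission
  imports Defs
begin

lemma rc_limit:
  fixes g :: "real \<Rightarrow> real"
  assumes rc: "continuous (at_right t) g"
  shows "(\<lambda>n. g (real_of_int \<lceil>t * 2^n\<rceil> / 2^n)) \<longlonglongrightarrow> g t"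
proof (rule tendstoI)
  fix e :: real assume e: "e > 0"
  have "((g \<longlongrightarrow> g t) (at_right t))" using rc by (simp add: continuous_within)
  then have "eventually (\<lambda>u. dist (g u) (g t) < e) (at_right t)" using e by (rule tendstoD)
  then obtain b where b: "b > t" and hb: "\<And>u. t < u \<Longrightarrow> u < b \<Longrightarrow> dist (g u) (g t) < e"
    unfolding eventually_at_right_field by blast
  have "(\<lambda>n. (1/2::real)^n) \<longlonglongrightarrow> 0" by (rule LIMSEQ_power_zero) auto
  then have "eventually (\<lambda>n. dist ((1/2::real)^n) 0 < b - t) sequentially"
    using b by (intro tendstoD) auto
  then show "eventually (\<lambda>n. dist (g (real_of_int \<lceil>t * 2^n\<rceil> / 2^n)) (g t) < e) sequentially"
  proof eventually_elim
    case (elim n)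
    define y where "y = real_of_int \<lceil>t * 2^n\<rceil> / 2^n"
    have p: "(2::real)^n > 0" by simp
    have "t * 2^n \<le> real_of_int \<lceil>t * 2^n\<rceil>" by linarith
    then have y1: "t \<le> y" unfolding y_def using p by (simp add: field_simps)
    have "real_of_int \<lceil>t * 2^n\<rceil> < t * 2^n + 1" by linarith
    then have "y < t + 1 / 2^n" unfolding y_def using p by (simp add: field_simps)
    moreover have "(1/2::real)^n < b - t" using elim by (simp add: power_divide)
    ultimately have y2: "y < b" by (simp add: power_divide)
    show ?case
    proof (cases "y = t")
      case True then show ?thesis using e by (simp add: y_def)
    next
      case False then show ?thesis using hb[of y] y1 y2 by (simp add: y_def)
    qed
  qed
qed

lemma rc_meas:
  fixes g :: "real \<Rightarrow> real"
  assumes "\<And>t. t \<in> S \<Longrightarrow> continuous (at_right t) g"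
  shows "g \<in> borel_measurable (lebesgue_on S)"
proof (rule borel_measurable_LIMSEQ_real[where u="\<lambda>n t. g (real_of_int \<lceil>t * 2^n\<rceil> / 2^n)"])
  fix t assume "t \<in> space (lebesgue_on S)"
  then show "(\<lambda>n. g (real_of_int \<lceil>t * 2^n\<rceil> / 2^n)) \<longlonglongrightarrow> g t"
    using assms rc_limit by auto
next
  fix n :: nat
  have c: "(\<lambda>t::real. \<lceil>t * 2^n\<rceil>) \<in> measurable borel (count_space UNIV)" by measurable
  have "(\<lambda>t::real. (\<lambda>k::int. g (real_of_int k / 2^n)) (\<lceil>t * 2^n\<rceil>)) \<in> borel_measurable borel"
    by (rule measurable_compose_countable'[where I=UNIV, OF _ c]) auto
  then have "(\<lambda>t::real. g (real_of_int \<lceil>t * 2^n\<rceil> / (2::real)^n)) \<in> borel_measurable lebesgue"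
    by (intro measurable_completion) simp
  then show "(\<lambda>t. g (real_of_int \<lceil>t * 2^n\<rceil> / 2^n)) \<in> borel_measurable (lebesgue_on S)"
    by (rule measurable_restrict_space1)
qed

lemma deriv_eps:
  fixes g :: "real \<Rightarrow> real"
  assumes "(g has_real_derivative D) (at a within {0..})" and e: "e > 0"
  shows "\<exists>d>0. \<forall>y. y \<ge> 0 \<and> \<bar>y - a\<bar> < d \<longrightarrow> \<bar>g y - g a - D * (y - a)\<bar> \<le> e * \<bar>y - a\<bar>"
proof -
  have "((\<lambda>y. (g y - g a) / (y - a)) \<longlongrightarrow> D) (at a within {0..})"
    using assms(1) by (simp add: has_field_derivative_iff)
  then have "eventually (\<lambda>y. dist ((g y - g a) / (y - a)) D < e) (at a within {0..})"
    using e by (rule tendstoD)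
  then obtain d where d: "d > 0" and hd: "\<And>y. y \<in> {0..} \<Longrightarrow> y \<noteq> a \<and> dist y a < d \<Longrightarrow> dist ((g y - g a) / (y - a)) D < e"
    unfolding eventually_at by blast
  show ?thesis
  proof (intro exI[of _ d] conjI allI impI d)
    fix y assume y: "y \<ge> 0 \<and> \<bar>y - a\<bar> < d"
    show "\<bar>g y - g a - D * (y - a)\<bar> \<le> e * \<bar>y - a\<bar>"
    proof (cases "y = a")
      case True then show ?thesis by simp
    next
      case False
      then have "\<bar>(g y - g a) / (y - a) - D\<bar> < e" using hd[of y] y by (simp add: dist_real_def)
      then have "\<bar>((g y - g a) / (y - a) - D) * (y - a)\<bar> \<le> e * \<bar>y - a\<bar>"
        by (simp add: abs_mult mult_right_mono)
      moreover have "((g y - g a) / (y - a) - D) * (y - a) = g y - g a - D * (y - a)"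
        using False by (simp add: field_simps)
      ultimately show ?thesis by simp
    qed
  qed
qed

lemma choice_lemma:
  fixes g1 g2 h1 h2 :: "real \<Rightarrow> real"
  assumes dg1: "(g1 has_real_derivative \<alpha>1) (at a within {0..})"
    and dg2: "(g2 has_real_derivative \<alpha>2) (at a2 within {0..})"
    and dh1: "(h1 has_real_derivative \<beta>1) (at b within {0..})"
    and dh2: "(h2 has_real_derivative \<beta>2) (at b2 within {0..})"
    and pos: "a > 0" "a2 > 0" "b > 0" "b2 > 0" "\<alpha>1 > 0" "\<alpha>2 > 0" "\<beta>1 > 0" "\<beta>2 > 0"
    and ratio: "\<alpha>1 * \<beta>2 > \<alpha>2 * \<beta>1"
  shows "\<exists>\<Delta> \<gamma> \<Delta>2. \<Delta> > 0 \<and> \<gamma> > 0 \<and> \<Delta>2 > 0 \<and> b - 3*\<gamma> - \<Delta> \<ge> 0 \<and> a2 - 3*\<gamma> - \<Delta>2 \<ge> 0 \<and>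
     g1 (a+\<gamma>+\<Delta>) - g1 (a+\<gamma>) > g2 (a2+\<gamma>) - g2 (a2-3*\<gamma>-\<Delta>2) \<and>
     h2 (b2+\<gamma>+\<Delta>2) - h2 (b2+\<gamma>) > h1 (b+\<gamma>) - h1 (b-3*\<gamma>-\<Delta>)"
proof -
  define m where "m = \<alpha>1 * \<beta>2 - \<alpha>2 * \<beta>1"
  have m: "m > 0" using ratio by (simp add: m_def)
  define \<rho> where "\<rho> = \<beta>1 / \<beta>2 + m / (2 * \<beta>2 * (\<alpha>2 + 1))"
  have rho: "\<rho> > 0" using pos m unfolding \<rho>_def by (intro add_pos_pos divide_pos_pos mult_pos_pos) auto
  define D where "D = \<alpha>1 - \<alpha>2 * \<rho>"
  define E where "E = \<rho> * \<beta>2 - \<beta>1"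
  have a21: "\<alpha>2 + 1 \<noteq> 0" "1 + \<alpha>2 \<noteq> 0" using pos by auto
  have q1: "m / (2 * \<beta>2 * (\<alpha>2 + 1)) * \<beta>2 = m / (2 * (\<alpha>2 + 1))"
    using pos by simp
  have E: "E = m / (2 * (\<alpha>2 + 1))" using pos q1 unfolding E_def \<rho>_def distrib_right by simp
  have Epos: "E > 0" using E m pos by simp
  have D: "D = m / \<beta>2 - \<alpha>2 * m / (2 * \<beta>2 * (\<alpha>2 + 1))"
    using pos a21 by (simp add: D_def \<rho>_def m_def field_simps)
  have "\<alpha>2 * m / (2 * \<beta>2 * (\<alpha>2 + 1)) < m / \<beta>2"
  proof -
    have "\<alpha>2 / (2 * (\<alpha>2 + 1)) < 1" using pos by (simp add: field_simps)
    then have "(\<alpha>2 / (2 * (\<alpha>2 + 1))) * (m / \<beta>2) < 1 * (m / \<beta>2)"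
      using m pos by (intro mult_strict_right_mono) auto
    then show ?thesis by (simp add: field_simps)
  qed
  then have Dpos: "D > 0" using D by simp
  define \<mu> where "\<mu> = min D E"
  have mu: "\<mu> > 0" "\<mu> \<le> D" "\<mu> \<le> E" using Dpos Epos by (auto simp: \<mu>_def)
  define \<eta> where "\<eta> = min 1 (\<mu> / (8 * (\<alpha>2 + \<beta>1 + 1)))"
  have eta: "\<eta> > 0" "\<eta> \<le> 1" "\<eta> \<le> \<mu> / (8 * (\<alpha>2 + \<beta>1 + 1))" using mu pos by (auto simp: \<eta>_def)
  have eta_a: "4 * \<alpha>2 * \<eta> \<le> \<mu> / 2" and eta_b: "4 * \<beta>1 * \<eta> \<le> \<mu> / 2"
  proof -
    have "\<eta> * (8 * (\<alpha>2 + \<beta>1 + 1)) \<le> \<mu>" using eta(3) pos by (simp add: field_simps)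
    then show "4 * \<alpha>2 * \<eta> \<le> \<mu> / 2" "4 * \<beta>1 * \<eta> \<le> \<mu> / 2" using eta pos
      by (simp_all add: algebra_simps) (smt (verit) mult_nonneg_nonneg)+
  qed
  define \<epsilon> where "\<epsilon> = \<mu> / (4 * (7 + \<rho>))"
  have eps: "\<epsilon> > 0" using mu rho by (simp add: \<epsilon>_def)
  have eps2: "\<epsilon> * (6 * \<eta> + 1 + \<rho>) \<le> \<mu> / 4"
  proof -
    have "\<epsilon> * (6 * \<eta> + 1 + \<rho>) \<le> \<epsilon> * (7 + \<rho>)" using eps eta by (intro mult_left_mono) auto
    also have "\<dots> = \<mu> / 4" using rho by (simp add: \<epsilon>_def field_simps)
    finally show ?thesis .
  qed
  obtain d1 where d1: "d1 > 0" "\<And>y. y \<ge> 0 \<Longrightarrow> \<bar>y - a\<bar> < d1 \<Longrightarrow> \<bar>g1 y - g1 a - \<alpha>1 * (y - a)\<bar> \<le> \<epsilon> * \<bar>y - a\<bar>"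
    using deriv_eps[OF dg1 eps] by blast
  obtain d2 where d2: "d2 > 0" "\<And>y. y \<ge> 0 \<Longrightarrow> \<bar>y - a2\<bar> < d2 \<Longrightarrow> \<bar>g2 y - g2 a2 - \<alpha>2 * (y - a2)\<bar> \<le> \<epsilon> * \<bar>y - a2\<bar>"
    using deriv_eps[OF dg2 eps] by blast
  obtain d3 where d3: "d3 > 0" "\<And>y. y \<ge> 0 \<Longrightarrow> \<bar>y - b\<bar> < d3 \<Longrightarrow> \<bar>h1 y - h1 b - \<beta>1 * (y - b)\<bar> \<le> \<epsilon> * \<bar>y - b\<bar>"
    using deriv_eps[OF dh1 eps] by blast
  obtain d4 where d4: "d4 > 0" "\<And>y. y \<ge> 0 \<Longrightarrow> \<bar>y - b2\<bar> < d4 \<Longrightarrow> \<bar>h2 y - h2 b2 - \<beta>2 * (y - b2)\<bar> \<le> \<epsilon> * \<bar>y - b2\<bar>"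
    using deriv_eps[OF dh2 eps] by blast
  define r where "r = min (min d1 d2) (min (min d3 d4) (min b a2))"
  have r: "r > 0" "r \<le> d1" "r \<le> d2" "r \<le> d3" "r \<le> d4" "r \<le> b" "r \<le> a2"
    using d1 d2 d3 d4 pos by (auto simp: r_def)
  define \<Delta> where "\<Delta> = r / (2 * (4 + \<rho>))"
  have Dl: "\<Delta> > 0" using r rho by (simp add: \<Delta>_def)
  have "\<Delta> * (4 + \<rho>) = r / 2" using rho unfolding \<Delta>_def by (simp add: field_simps)
  then have Dl2: "\<Delta> * (4 + \<rho>) < r" using r by simp
  define \<gamma> where "\<gamma> = \<eta> * \<Delta>"
  define \<Delta>2 where "\<Delta>2 = \<rho> * \<Delta>"
  have ga: "\<gamma> > 0" "\<gamma> \<le> \<Delta>" using eta Dl by (auto simp: \<gamma>_def mult_le_cancel_right1)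
  have De2: "\<Delta>2 > 0" using rho Dl by (simp add: \<Delta>2_def)
  have sm: "3 * \<gamma> + \<Delta>2 + \<Delta> < r" using Dl2 ga by (simp add: \<Delta>2_def algebra_simps)
  have e1: "\<bar>g1 (a+\<gamma>+\<Delta>) - g1 a - \<alpha>1 * (\<gamma>+\<Delta>)\<bar> \<le> \<epsilon> * (\<gamma>+\<Delta>)"
    using d1(2)[of "a+\<gamma>+\<Delta>"] pos ga Dl sm r De2 by simp
  have e2: "\<bar>g1 (a+\<gamma>) - g1 a - \<alpha>1 * \<gamma>\<bar> \<le> \<epsilon> * \<gamma>"
    using d1(2)[of "a+\<gamma>"] pos ga Dl sm r De2 by simp
  have e3: "\<bar>g2 (a2+\<gamma>) - g2 a2 - \<alpha>2 * \<gamma>\<bar> \<le> \<epsilon> * \<gamma>"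
    using d2(2)[of "a2+\<gamma>"] pos ga Dl sm r De2 by simp
  have e4: "\<bar>g2 (a2-3*\<gamma>-\<Delta>2) - g2 a2 + \<alpha>2 * (3*\<gamma>+\<Delta>2)\<bar> \<le> \<epsilon> * (3*\<gamma>+\<Delta>2)"
    using d2(2)[of "a2-3*\<gamma>-\<Delta>2"] pos ga Dl sm r De2 by (simp add: algebra_simps)
  have f1: "\<bar>h2 (b2+\<gamma>+\<Delta>2) - h2 b2 - \<beta>2 * (\<gamma>+\<Delta>2)\<bar> \<le> \<epsilon> * (\<gamma>+\<Delta>2)"
    using d4(2)[of "b2+\<gamma>+\<Delta>2"] pos ga Dl sm r De2 by simp
  have f2: "\<bar>h2 (b2+\<gamma>) - h2 b2 - \<beta>2 * \<gamma>\<bar> \<le> \<epsilon> * \<gamma>"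
    using d4(2)[of "b2+\<gamma>"] pos ga Dl sm r De2 by simp
  have f3: "\<bar>h1 (b+\<gamma>) - h1 b - \<beta>1 * \<gamma>\<bar> \<le> \<epsilon> * \<gamma>"
    using d3(2)[of "b+\<gamma>"] pos ga Dl sm r De2 by simp
  have f4: "\<bar>h1 (b-3*\<gamma>-\<Delta>) - h1 b + \<beta>1 * (3*\<gamma>+\<Delta>)\<bar> \<le> \<epsilon> * (3*\<gamma>+\<Delta>)"
    using d3(2)[of "b-3*\<gamma>-\<Delta>"] pos ga Dl sm r De2 by (simp add: algebra_simps)
  have lowI: "g1 (a+\<gamma>+\<Delta>) - g1 (a+\<gamma>) - (g2 (a2+\<gamma>) - g2 (a2-3*\<gamma>-\<Delta>2))
      \<ge> \<alpha>1 * \<Delta> - \<alpha>2 * \<Delta>2 - 4 * \<alpha>2 * \<gamma> - \<epsilon> * (6 * \<gamma> + \<Delta> + \<Delta>2)"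
    using e1 e2 e3 e4 by (simp add: algebra_simps abs_le_iff)
  have "\<alpha>1 * \<Delta> - \<alpha>2 * \<Delta>2 - 4 * \<alpha>2 * \<gamma> - \<epsilon> * (6 * \<gamma> + \<Delta> + \<Delta>2)
      = \<Delta> * (D - 4 * \<alpha>2 * \<eta> - \<epsilon> * (6 * \<eta> + 1 + \<rho>))"
    by (simp add: D_def \<gamma>_def \<Delta>2_def algebra_simps)
  moreover have "D - 4 * \<alpha>2 * \<eta> - \<epsilon> * (6 * \<eta> + 1 + \<rho>) > 0" using eta_a eps2 mu by linarith
  ultimately have I: "g1 (a+\<gamma>+\<Delta>) - g1 (a+\<gamma>) > g2 (a2+\<gamma>) - g2 (a2-3*\<gamma>-\<Delta>2)"
    using lowI Dl by (smt (verit) mult_pos_pos)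
  have lowJ: "h2 (b2+\<gamma>+\<Delta>2) - h2 (b2+\<gamma>) - (h1 (b+\<gamma>) - h1 (b-3*\<gamma>-\<Delta>))
      \<ge> \<beta>2 * \<Delta>2 - \<beta>1 * \<Delta> - 4 * \<beta>1 * \<gamma> - \<epsilon> * (6 * \<gamma> + \<Delta> + \<Delta>2)"
    using f1 f2 f3 f4 by (simp add: algebra_simps abs_le_iff)
  have "\<beta>2 * \<Delta>2 - \<beta>1 * \<Delta> - 4 * \<beta>1 * \<gamma> - \<epsilon> * (6 * \<gamma> + \<Delta> + \<Delta>2)
      = \<Delta> * (E - 4 * \<beta>1 * \<eta> - \<epsilon> * (6 * \<eta> + 1 + \<rho>))"
    by (simp add: E_def \<gamma>_def \<Delta>2_def algebra_simps)
  moreover have "E - 4 * \<beta>1 * \<eta> - \<epsilon> * (6 * \<eta> + 1 + \<rho>) > 0" using eta_b eps2 mu by linarith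
  ultimately have J: "h2 (b2+\<gamma>+\<Delta>2) - h2 (b2+\<gamma>) > h1 (b+\<gamma>) - h1 (b-3*\<gamma>-\<Delta>)"
    using lowJ Dl by (smt (verit) mult_pos_pos)
  have "b - 3*\<gamma> - \<Delta> \<ge> 0" "a2 - 3*\<gamma> - \<Delta>2 \<ge> 0" using sm r ga De2 Dl by auto
  then show ?thesis using I J Dl ga De2 by blast
qed

lemma deriv_eps_aux:
  fixes g :: "real \<Rightarrow> real"
  assumes "(g has_real_derivative D) (at a within {0..})" and e: "e > 0"
  shows "\<exists>d>0. \<forall>y. y \<ge> 0 \<and> \<bar>y - a\<bar> < d \<longrightarrow> \<bar>g y - g a - D * (y - a)\<bar> \<le> e * \<bar>y - a\<bar>"
proof -
  have "((\<lambda>y. (g y - g a) / (y - a)) \<longlongrightarrow> D) (at a within {0..})"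
    using assms(1) by (simp add: has_field_derivative_iff)
  then have "eventually (\<lambda>y. dist ((g y - g a) / (y - a)) D < e) (at a within {0..})"
    using e by (rule tendstoD)
  then obtain d where d: "d > 0" and hd: "\<And>y. y \<in> {0..} \<Longrightarrow> y \<noteq> a \<and> dist y a < d \<Longrightarrow> dist ((g y - g a) / (y - a)) D < e"
    unfolding eventually_at by blast
  show ?thesis
  proof (intro exI[of _ d] conjI allI impI d)
    fix y assume y: "y \<ge> 0 \<and> \<bar>y - a\<bar> < d"
    show "\<bar>g y - g a - D * (y - a)\<bar> \<le> e * \<bar>y - a\<bar>"
    proof (cases "y = a")
      case True then show ?thesis by simp
    next
      case False
      then have "\<bar>(g y - g a) / (y - a) - D\<bar> < e" using hd[of y] y by (simp add: dist_real_def)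
      then have "\<bar>((g y - g a) / (y - a) - D) * (y - a)\<bar> \<le> e * \<bar>y - a\<bar>"
        by (simp add: abs_mult mult_right_mono)
      moreover have "((g y - g a) / (y - a) - D) * (y - a) = g y - g a - D * (y - a)"
        using False by (simp add: field_simps)
      ultimately show ?thesis by simp
    qed
  qed
qed

lemma ds_pos:
  assumes sp: "speedup_ok s ds" and t: "t \<ge> 0" and th: "\<theta> \<ge> 0"
  shows "ds k \<theta> t > 0"
proof -
  define g where "g = (\<lambda>y. s k y t)"
  have sm: "strict_mono_on {0..} g" and cc: "strict_concave_on {0..} g"
    and dv: "(g has_real_derivative ds k \<theta> t) (at \<theta> within {0..})"
    using sp t th unfolding speedup_ok_def g_def by auto
  define \<sigma> where "\<sigma> = g (\<theta>+1) - g \<theta>"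
  have sig: "\<sigma> > 0" using strict_mono_onD[OF sm, of \<theta> "\<theta>+1"] th unfolding \<sigma>_def by simp
  obtain d where d: "d > 0" and hd: "\<And>y. y \<ge> 0 \<and> \<bar>y - \<theta>\<bar> < d \<Longrightarrow> \<bar>g y - g \<theta> - ds k \<theta> t * (y - \<theta>)\<bar> \<le> \<sigma>/2 * \<bar>y - \<theta>\<bar>"
    using deriv_eps_aux[OF dv, of "\<sigma>/2"] sig by auto
  define u where "u = min (1/2) (d/2)"
  have u: "0 < u" "u < 1" "u < d" using d by (auto simp: u_def)
  have "g (u * (\<theta>+1) + (1 - u) * \<theta>) > u * g (\<theta>+1) + (1 - u) * g \<theta>"
    using cc u th unfolding strict_concave_on_def by auto
  moreover have "u * (\<theta>+1) + (1 - u) * \<theta> = \<theta> + u" by (simp add: algebra_simps)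
  ultimately have c1: "g (\<theta> + u) - g \<theta> > u * \<sigma>" by (simp add: \<sigma>_def algebra_simps)
  have "\<bar>g (\<theta>+u) - g \<theta> - ds k \<theta> t * u\<bar> \<le> \<sigma>/2 * u" using hd[of "\<theta>+u"] u th by simp
  then have "g (\<theta>+u) - g \<theta> - ds k \<theta> t * u \<le> \<sigma>/2 * u" by (rule abs_le_D1)
  then have "u * \<sigma> < u * (ds k \<theta> t + \<sigma>/2)" using c1 by (simp add: algebra_simps)
  then have "\<sigma> < ds k \<theta> t + \<sigma>/2" using u by simp
  then show ?thesis using sig by simp
qed

lemma hit:
  fixes F :: "real \<Rightarrow> real"
  assumes cont: "continuous_on {0..T} F" and F0: "F 0 = 0" and x: "x > 0" and FT: "x \<le> F T" and T: "T \<ge> 0"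
  shows "\<exists>T'. 0 \<le> T' \<and> T' \<le> T \<and> F T' = x \<and> (\<forall>\<tau>. 0 \<le> \<tau> \<and> \<tau> < T' \<longrightarrow> F \<tau> < x) \<and> (x < F T \<longrightarrow> T' < T)"
proof -
  define S where "S = {0..T} \<inter> F -` {x..}"
  have cS: "closed S" unfolding S_def by (rule continuous_closed_preimage[OF cont]) auto
  have neS: "S \<noteq> {}" and TS: "T \<in> S" using FT T by (auto simp: S_def)
  have bS: "bdd_below S" by (auto simp: S_def bdd_below_def)
  define T' where "T' = Inf S"
  have T'S: "T' \<in> S" unfolding T'_def using closed_contains_Inf[OF neS bS cS] .
  then have T'r: "0 \<le> T'" "T' \<le> T" "x \<le> F T'" by (auto simp: S_def)
  have below: "F \<tau> < x" if "0 \<le> \<tau>" "\<tau> < T'" for \<tau>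
  proof (rule ccontr)
    assume "\<not> F \<tau> < x"
    then have "\<tau> \<in> S" using that T'r by (auto simp: S_def)
    then have "T' \<le> \<tau>" unfolding T'_def using bS by (rule cInf_lower)
    then show False using that by simp
  qed
  have T'pos: "T' > 0"
  proof (rule ccontr)
    assume "\<not> T' > 0" then have "T' = 0" using T'r by simp
    then show False using T'r F0 x by simp
  qed
  have eq: "F T' = x"
  proof (rule ccontr)
    assume "F T' \<noteq> x" then have gt: "F T' > x" using T'r by simp
    have "T' \<in> {0..T}" using T'r by simp
    then obtain d where d: "d > 0" and hd: "\<And>y. y \<in> {0..T} \<Longrightarrow> dist y T' < d \<Longrightarrow> dist (F y) (F T') < F T' - x"
      using cont gt unfolding continuous_on_iff by (metis diff_gt_0_iff_gt)
    define y where "y = T' - min T' d / 2"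
    have y: "0 \<le> y" "y < T'" "dist y T' < d" using d T'pos by (auto simp: y_def dist_real_def)
    have "dist (F y) (F T') < F T' - x" using hd y T'r by simp
    then have "F y > x" by (simp add: dist_real_def abs_less_iff)
    then show False using below y by fastforce
  qed
  show ?thesis
  proof (intro exI[of _ T'] conjI T'r eq allI impI)
    fix \<tau> assume "0 \<le> \<tau> \<and> \<tau> < T'" then show "F \<tau> < x" using below by blast
  next
    assume "x < F T" then show "T' < T" using eq T'r by (cases "T' = T") auto
  qed
qed

lemma f_weak:
  fixes f :: "real^'m::finite \<Rightarrow> real"
  assumes f_mono: "\<And>U i a. a > U $ i \<Longrightarrow> f U < f (\<chi> k. if k = i then a else U $ k)"
    and le: "\<And>k. U $ k \<le> V $ k"
  shows "f U \<le> f V"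
proof -
  define W where "W S = (\<chi> k. if k \<in> S then V $ k else U $ k)" for S
  have "f U \<le> f (W S)" if "finite S" for S
    using that
  proof (induction S rule: finite_induct)
    case empty then show ?case by (simp add: W_def)
  next
    case (insert a S)
    have WW: "W (insert a S) = (\<chi> k. if k = a then V $ a else W S $ k)"
      by (simp add: W_def vec_eq_iff)
    show ?case
    proof (cases "V $ a > W S $ a")
      case True
      then have "f (W S) < f (W (insert a S))" unfolding WW by (rule f_mono)
      then show ?thesis using insert by simp
    next
      case False
      then have "V $ a = W S $ a" using le[of a] insert by (simp add: W_def)
      then have "W (insert a S) = W S" unfolding WW by (simp add: vec_eq_iff)
      then show ?thesis using insert by simp
    qed
  qed
  from this[of UNIV] show ?thesis by (simp add: W_def)
qed

lemma f_strict:
  fixes f :: "real^'m::finite \<Rightarrow> real"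
  assumes f_mono: "\<And>U i a. a > U $ i \<Longrightarrow> f U < f (\<chi> k. if k = i then a else U $ k)"
    and le: "\<And>k. U $ k \<le> V $ k" and lt: "U $ i < V $ i"
  shows "f U < f V"
proof -
  have "f U < f (\<chi> k. if k = i then V $ i else U $ k)" using lt by (rule f_mono)
  also have "\<dots> \<le> f V" by (rule f_weak[OF f_mono]) (use le in \<open>auto\<close>)
  finally show ?thesis .
qed

lemma rc_cong:
  fixes g h :: "real \<Rightarrow> real"
  assumes "continuous (at_right t) g" "eventually (\<lambda>u. h u = g u) (at_right t)" "h t = g t"
  shows "continuous (at_right t) h"
  using assms unfolding continuous_within by (simp add: tendsto_cong)

lemma truncate:
  fixes \<phi> :: "'m::finite \<Rightarrow> real \<Rightarrow> real" and T :: "real^'m"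
  assumes s0: "\<And>k t. t \<ge> 0 \<Longrightarrow> s k 0 t = 0"
  and nn: "\<And>k t. t \<ge> 0 \<Longrightarrow> \<phi> k t \<ge> 0 \<and> continuous (at_right t) (\<phi> k)"
  and sumB: "\<And>t. t > 0 \<Longrightarrow> (\<Sum>k\<in>UNIV. \<phi> k t) \<le> B t"
  and int: "\<And>k \<tau>. \<tau> \<ge> 0 \<Longrightarrow> (\<lambda>t. s k (\<phi> k t) t) integrable_on {0..\<tau>}"
  and Tnn: "\<And>k. T $ k \<ge> 0"
  and ge: "\<And>k. service s \<phi> k 0 (T$k) \<ge> x k"
  and xpos: "\<And>k. x k > 0"
  shows "\<exists>\<phi>' T'. feasible B s x \<phi>' T' \<and> (\<forall>k. T'$k \<le> T$k \<and> (service s \<phi> k 0 (T$k) > x k \<longrightarrow> T'$k < T$k))"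
proof -
  have "\<forall>k. \<exists>T'. 0 \<le> T' \<and> T' \<le> T$k \<and> service s \<phi> k 0 T' = x k \<and>
      (\<forall>\<tau>. 0 \<le> \<tau> \<and> \<tau> < T' \<longrightarrow> service s \<phi> k 0 \<tau> < x k) \<and> (x k < service s \<phi> k 0 (T$k) \<longrightarrow> T' < T$k)"
  proof
    fix k
    show "\<exists>T'. 0 \<le> T' \<and> T' \<le> T$k \<and> service s \<phi> k 0 T' = x k \<and>
      (\<forall>\<tau>. 0 \<le> \<tau> \<and> \<tau> < T' \<longrightarrow> service s \<phi> k 0 \<tau> < x k) \<and> (x k < service s \<phi> k 0 (T$k) \<longrightarrow> T' < T$k)"
    proof -
      have c: "continuous_on {0..T$k} (\<lambda>\<tau>. integral {0..\<tau>} (\<lambda>t. s k (\<phi> k t) t))"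
        by (rule indefinite_integral_continuous_1[OF int[OF Tnn]])
      have z: "integral {0..0} (\<lambda>t. s k (\<phi> k t) t) = 0" by simp
      show ?thesis using hit[OF c z xpos[of k] _ Tnn[of k]] ge[of k] unfolding service_def by blast
    qed
  qed
  from choice[OF this] obtain Tf where Tf0: "\<forall>k. 0 \<le> Tf k \<and> Tf k \<le> T$k \<and> service s \<phi> k 0 (Tf k) = x k \<and>
      (\<forall>\<tau>. 0 \<le> \<tau> \<and> \<tau> < Tf k \<longrightarrow> service s \<phi> k 0 \<tau> < x k) \<and> (x k < service s \<phi> k 0 (T$k) \<longrightarrow> Tf k < T$k)"
    by blast
  note Tf = spec[OF Tf0]
  define \<phi>' where "\<phi>' k t = (if t < Tf k then \<phi> k t else 0)" for k t
  define T' :: "real^'m" where "T' = (\<chi> k. Tf k)"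
  have ig: "(\<lambda>t. s k (\<phi>' k t) t) = (\<lambda>t. if t < Tf k then s k (\<phi> k t) t else s k 0 t)" for k
    by (auto simp: \<phi>'_def)
  have int_eq: "integral {0..\<tau>} (\<lambda>t. s k (\<phi>' k t) t) = integral {0..\<tau>} (\<lambda>t. s k (\<phi> k t) t)"
    and int_le: "(\<lambda>t. s k (\<phi>' k t) t) integrable_on {0..\<tau>}"
    if "0 \<le> \<tau>" "\<tau> \<le> Tf k" for k \<tau>
  proof -
    have e: "s k (\<phi>' k t) t = s k (\<phi> k t) t" if "t \<in> {0..\<tau>} - {Tf k}" for t
      using that \<open>\<tau> \<le> Tf k\<close> by (auto simp: \<phi>'_def)
    show "integral {0..\<tau>} (\<lambda>t. s k (\<phi>' k t) t) = integral {0..\<tau>} (\<lambda>t. s k (\<phi> k t) t)"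
      by (rule integral_spike[of "{Tf k}"]) (use e in auto)
    show "(\<lambda>t. s k (\<phi>' k t) t) integrable_on {0..\<tau>}"
      by (rule integrable_spike[OF int[OF \<open>0 \<le> \<tau>\<close>], of "{Tf k}"]) (use e in auto)
  qed
  have feas: "feasible B s x \<phi>' T'"
    unfolding feasible_def
  proof (intro conjI allI impI)
    fix k and t :: real assume t: "t \<ge> 0"
    show "\<phi>' k t \<ge> 0" using nn[OF t] by (simp add: \<phi>'_def)
    show "continuous (at_right t) (\<phi>' k)"
    proof (cases "t < Tf k")
      case True
      have "eventually (\<lambda>u. u < Tf k) (at_right t)"
        unfolding eventually_at_right_field using True by (intro exI[of _ "Tf k"]) auto
      then have ev: "eventually (\<lambda>u. \<phi>' k u = \<phi> k u) (at_right t)"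
        by eventually_elim (simp add: \<phi>'_def)
      have c: "continuous (at_right t) (\<phi> k)" using nn[OF t] by blast
      have e: "\<phi>' k t = \<phi> k t" using True by (simp add: \<phi>'_def)
      show ?thesis by (rule rc_cong[OF c ev e])
    next
      case False
      have "eventually (\<lambda>u. t < u) (at_right t)" by (rule eventually_at_right_less)
      then have ev: "eventually (\<lambda>u. \<phi>' k u = (\<lambda>_. 0) u) (at_right t)"
        by eventually_elim (use False in \<open>simp add: \<phi>'_def\<close>)
      have c: "continuous (at_right t) (\<lambda>_. 0::real)" by (rule continuous_const)
      have e: "\<phi>' k t = (\<lambda>_. 0) t" using False by (simp add: \<phi>'_def)
      show ?thesis by (rule rc_cong[OF c ev e])
    qed
  next
    fix t :: real assume t: "t > 0"
    have "(\<Sum>k\<in>UNIV. \<phi>' k t) \<le> (\<Sum>k\<in>UNIV. \<phi> k t)"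
      by (rule sum_mono) (use nn t in \<open>auto simp: \<phi>'_def\<close>)
    then show "(\<Sum>k\<in>UNIV. \<phi>' k t) \<le> B t" using sumB[OF t] by simp
  next
    fix k and \<tau> :: real assume \<tau>: "\<tau> \<ge> 0"
    show "(\<lambda>t. s k (\<phi>' k t) t) integrable_on {0..\<tau>}"
    proof (cases "\<tau> \<le> Tf k")
      case True then show ?thesis using int_le \<tau> by blast
    next
      case False
      have a: "(\<lambda>t. s k (\<phi>' k t) t) integrable_on {0..Tf k}" using int_le[of "Tf k" k] Tf[of k] by simp
      have b: "(\<lambda>t. s k (\<phi>' k t) t) integrable_on {Tf k..\<tau>}"
      proof (rule integrable_spike[of "\<lambda>_. 0" _ "{}"])
        show "(\<lambda>_. 0::real) integrable_on {Tf k..\<tau>}" by (rule integrable_0)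
        fix t assume "t \<in> {Tf k..\<tau>} - {}"
        then show "s k (\<phi>' k t) t = 0" using s0 Tf[of k] by (auto simp: \<phi>'_def)
      qed auto
      show ?thesis by (rule Henstock_Kurzweil_Integration.integrable_combine[OF _ _ a b]) (use False Tf[of k] in linarith)+
    qed
  next
    fix k
    show "T' $ k \<ge> 0" using Tf by (simp add: T'_def)
    show "service s \<phi>' k 0 (T' $ k) = x k"
      using Tf[of k] int_eq[of "Tf k" k] by (simp add: T'_def service_def)
  next
    fix k \<tau> assume a: "0 \<le> \<tau> \<and> \<tau> < T' $ k"
    then show "service s \<phi>' k 0 \<tau> < x k"
      using Tf[of k] int_eq[of \<tau> k] by (auto simp: T'_def service_def)
  next
    fix k t assume "t > T' $ k"
    then show "\<phi>' k t = 0" by (simp add: T'_def \<phi>'_def)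
  qed
  show ?thesis
  proof (intro exI[of _ \<phi>'] exI[of _ T'] conjI feas allI impI)
    fix k
    show "T' $ k \<le> T $ k" using Tf[of k] by (simp add: T'_def)
    assume "x k < service s \<phi> k 0 (T $ k)"
    then show "T' $ k < T $ k" using Tf[of k] by (simp add: T'_def)
  qed
qed

lemma rc_integrable:
  fixes g :: "real \<Rightarrow> real"
  assumes "\<And>t. t \<in> {c..d} \<Longrightarrow> continuous (at_right t) g" "\<And>t. t \<in> {c..d} \<Longrightarrow> \<bar>g t\<bar> \<le> M"
  shows "g integrable_on {c..d}"
  by (rule measurable_bounded_by_integrable_imp_integrable_real[OF rc_meas[OF assms(1)] _ assms(2)]) auto

lemma int_piece:
  fixes P Og :: "real \<Rightarrow> real"
  assumes P: "P integrable_on {c..d}" and Og: "\<And>\<tau>. \<tau> \<ge> 0 \<Longrightarrow> Og integrable_on {0..\<tau>}"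
    and c: "0 \<le> c" "c \<le> d"
  shows "\<And>\<tau>. \<tau> \<ge> 0 \<Longrightarrow> (\<lambda>t. if t \<in> {c..<d} then P t else Og t) integrable_on {0..\<tau>}"
    and "\<And>\<tau>. d \<le> \<tau> \<Longrightarrow> integral {0..\<tau>} (\<lambda>t. if t \<in> {c..<d} then P t else Og t)
            = integral {0..\<tau>} Og + integral {c..d} (\<lambda>t. P t - Og t)"
proof -
  have Oc: "Og integrable_on {c..d}"
    by (rule integrable_on_subinterval[OF Og[of d]]) (use c in auto)
  have PO: "(\<lambda>t. P t - Og t) integrable_on {c..d}" by (rule integrable_diff[OF P Oc])
  define R where "R = (\<lambda>t. if t \<in> {c..d} then P t - Og t else 0)"
  have RU: "R integrable_on UNIV" unfolding R_def Henstock_Kurzweil_Integration.integrable_restrict_UNIV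
    by (rule PO)
  have Rt: "R integrable_on {0..\<tau>}" for \<tau> by (rule integrable_on_subinterval[OF RU]) auto
  have eq: "(if t \<in> {c..<d} then P t else Og t) = Og t + R t" if "t \<noteq> d" for t
  proof (cases "t \<in> {c..<d}")
    case True then show ?thesis by (simp add: R_def)
  next
    case False
    then have "t \<notin> {c..d}" using that by auto
    then have "R t = 0" unfolding R_def by auto
    then show ?thesis using False by auto
  qed
  show "(\<lambda>t. if t \<in> {c..<d} then P t else Og t) integrable_on {0..\<tau>}" if "\<tau> \<ge> 0" for \<tau>
  proof (rule integrable_spike[OF integrable_add[OF Og[OF that] Rt], of "{d}"])
    fix x assume "x \<in> {0..\<tau>} - {d}"
    then have "x \<noteq> d" by blast
    then show "(if x \<in> {c..<d} then P x else Og x) = Og x + R x" by (rule eq)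
  qed auto
  show "integral {0..\<tau>} (\<lambda>t. if t \<in> {c..<d} then P t else Og t)
            = integral {0..\<tau>} Og + integral {c..d} (\<lambda>t. P t - Og t)" if "d \<le> \<tau>" for \<tau>
  proof -
    have t0: "\<tau> \<ge> 0" using that c by simp
    have "integral {0..\<tau>} (\<lambda>t. if t \<in> {c..<d} then P t else Og t) = integral {0..\<tau>} (\<lambda>t. Og t + R t)"
    proof (rule integral_spike[of "{d}"])
      fix x assume "x \<in> {0..\<tau>} - {d}"
      then have "x \<noteq> d" by blast
      then show "Og x + R x = (if x \<in> {c..<d} then P x else Og x)" by (rule eq[symmetric])
    qed auto
    also have "\<dots> = integral {0..\<tau>} Og + integral {0..\<tau>} R"
      by (rule integral_add[OF Og[OF t0] Rt])
    also have "integral {0..\<tau>} R = integral ({c..d} \<inter> {0..\<tau>}) (\<lambda>t. P t - Og t)"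
      unfolding R_def by (rule Henstock_Kurzweil_Integration.integral_restrict_Int)
    also have "{c..d} \<inter> {0..\<tau>} = {c..d}" using c that by auto
    finally show ?thesis .
  qed
qed

lemma piece_bound:
  fixes F :: "real \<Rightarrow> real"
  assumes "F integrable_on {c..c+\<delta>}" "\<delta> \<ge> 0" "\<And>t. t \<in> {c..c+\<delta>} \<Longrightarrow> F t \<ge> L"
  shows "integral {c..c+\<delta>} F \<ge> \<delta> * L"
proof -
  have "integral {c..c+\<delta>} (\<lambda>_. L) \<le> integral {c..c+\<delta>} F"
    by (rule integral_le) (use assms in auto)
  then show ?thesis using assms(2) by simp
qed

lemma job_gain:
  fixes Og P1 P2 :: "real \<Rightarrow> real"
  assumes Og0: "\<forall>\<tau>\<ge>0. Og integrable_on {0..\<tau>}"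
    and P1: "P1 integrable_on {c1..c1+\<delta>}" and P2: "P2 integrable_on {c2..c2+\<delta>}"
    and c: "0 \<le> c1" "0 \<le> c2" "\<delta> > 0" and disj: "c1 + \<delta> < c2 \<or> c2 + \<delta> < c1"
    and le: "c1 + \<delta> \<le> \<tau>0" "c2 + \<delta> \<le> \<tau>0"
    and low10: "\<forall>u\<in>{c1..c1+\<delta>}. P1 u - Og u \<ge> L1"
    and low20: "\<forall>u\<in>{c2..c2+\<delta>}. P2 u - Og u \<ge> L2"
  shows "\<And>\<tau>. \<tau> \<ge> 0 \<Longrightarrow> (\<lambda>u. if u \<in> {c1..<c1+\<delta>} then P1 u else if u \<in> {c2..<c2+\<delta>} then P2 u else Og u) integrable_on {0..\<tau>}"
    and "integral {0..\<tau>0} (\<lambda>u. if u \<in> {c1..<c1+\<delta>} then P1 u else if u \<in> {c2..<c2+\<delta>} then P2 u else Og u)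
          \<ge> integral {0..\<tau>0} Og + \<delta> * L1 + \<delta> * L2"
proof -
  have Og: "\<And>\<tau>. \<tau> \<ge> 0 \<Longrightarrow> Og integrable_on {0..\<tau>}" using Og0 by blast
  have low1: "\<And>u. u \<in> {c1..c1+\<delta>} \<Longrightarrow> P1 u - Og u \<ge> L1" using low10 by blast
  have low2: "\<And>u. u \<in> {c2..c2+\<delta>} \<Longrightarrow> P2 u - Og u \<ge> L2" using low20 by blast
  define O2 where "O2 u = (if u \<in> {c2..<c2+\<delta>} then P2 u else Og u)" for u
  have O2i: "\<And>\<tau>. \<tau> \<ge> 0 \<Longrightarrow> O2 integrable_on {0..\<tau>}"
    unfolding O2_def by (rule int_piece(1)[OF P2 Og]) (use c in auto)
  have O2e: "integral {0..\<tau>0} O2 = integral {0..\<tau>0} Og + integral {c2..c2+\<delta>} (\<lambda>t. P2 t - Og t)"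
    unfolding O2_def by (rule int_piece(2)[OF P2 Og]) (use c le in auto)
  have fe: "(\<lambda>u. if u \<in> {c1..<c1+\<delta>} then P1 u else O2 u) = (\<lambda>u. if u \<in> {c1..<c1+\<delta>} then P1 u else if u \<in> {c2..<c2+\<delta>} then P2 u else Og u)"
    by (rule ext) (simp add: O2_def)
  show "\<And>\<tau>. \<tau> \<ge> 0 \<Longrightarrow> (\<lambda>u. if u \<in> {c1..<c1+\<delta>} then P1 u else if u \<in> {c2..<c2+\<delta>} then P2 u else Og u) integrable_on {0..\<tau>}"
  proof -
    fix \<tau> :: real assume "\<tau> \<ge> 0"
    from int_piece(1)[OF P1 O2i _ _ this] c
    show "(\<lambda>u. if u \<in> {c1..<c1+\<delta>} then P1 u else if u \<in> {c2..<c2+\<delta>} then P2 u else Og u) integrable_on {0..\<tau>}"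
      unfolding fe by simp
  qed
  have e1: "integral {0..\<tau>0} (\<lambda>u. if u \<in> {c1..<c1+\<delta>} then P1 u else O2 u)
      = integral {0..\<tau>0} O2 + integral {c1..c1+\<delta>} (\<lambda>t. P1 t - O2 t)"
    by (rule int_piece(2)[OF P1 O2i]) (use c le in auto)
  have e2: "integral {c1..c1+\<delta>} (\<lambda>t. P1 t - O2 t) = integral {c1..c1+\<delta>} (\<lambda>t. P1 t - Og t)"
  proof (rule integral_cong)
    fix u assume "u \<in> {c1..c1+\<delta>}"
    then have "u \<notin> {c2..<c2+\<delta>}" using disj by auto
    then show "P1 u - O2 u = P1 u - Og u" unfolding O2_def by auto
  qed
  have Oc1: "Og integrable_on {c1..c1+\<delta>}"
    by (rule integrable_on_subinterval[OF Og[of "c1+\<delta>"]]) (use c in auto)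
  have Oc2: "Og integrable_on {c2..c2+\<delta>}"
    by (rule integrable_on_subinterval[OF Og[of "c2+\<delta>"]]) (use c in auto)
  have b1: "integral {c1..c1+\<delta>} (\<lambda>t. P1 t - Og t) \<ge> \<delta> * L1"
    by (rule piece_bound[OF integrable_diff[OF P1 Oc1]]) (use c low1 in auto)
  have b2: "integral {c2..c2+\<delta>} (\<lambda>t. P2 t - Og t) \<ge> \<delta> * L2"
    by (rule piece_bound[OF integrable_diff[OF P2 Oc2]]) (use c low2 in auto)
  show "integral {0..\<tau>0} (\<lambda>u. if u \<in> {c1..<c1+\<delta>} then P1 u else if u \<in> {c2..<c2+\<delta>} then P2 u else Og u)
          \<ge> integral {0..\<tau>0} Og + \<delta> * L1 + \<delta> * L2"
    using e1 e2 O2e b1 b2 unfolding fe by linarith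
qed

lemma rc_if:
  fixes g h :: "real \<Rightarrow> real"
  assumes g: "continuous (at_right t) g" and h: "continuous (at_right t) h"
  shows "continuous (at_right t) (\<lambda>u. if u \<in> {c..<d} then g u else h u)"
proof (cases "t < c")
  case True
  have ev: "eventually (\<lambda>u. (if u \<in> {c..<d} then g u else h u) = h u) (at_right t)"
    unfolding eventually_at_right_field using True by (intro exI[of _ c]) auto
  show ?thesis by (rule rc_cong[OF h ev]) (use True in auto)
next
  case False
  show ?thesis
  proof (cases "t < d")
    case True
    have ev: "eventually (\<lambda>u. (if u \<in> {c..<d} then g u else h u) = g u) (at_right t)"
      unfolding eventually_at_right_field using True False by (intro exI[of _ d]) auto
    show ?thesis by (rule rc_cong[OF g ev]) (use True False in auto)
  next
    case False2: False
    have ev: "eventually (\<lambda>u. (if u \<in> {c..<d} then g u else h u) = h u) (at_right t)"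
      unfolding eventually_at_right_field using False2 by (intro exI[of _ "t+1"]) auto
    show ?thesis by (rule rc_cong[OF h ev]) (use False2 in auto)
  qed
qed

lemma rc_ev:
  fixes g :: "real \<Rightarrow> real"
  assumes "continuous (at_right t) g" "e > 0"
  shows "eventually (\<lambda>u. \<bar>g u - g t\<bar> < e) (at_right t)"
proof -
  have "(g \<longlongrightarrow> g t) (at_right t)" using assms(1) by (simp add: continuous_within)
  from tendstoD[OF this assms(2)] show ?thesis by (simp add: dist_real_def)
qed

lemma rc_window:
  fixes t :: real
  assumes "eventually P (at_right t)" "P t"
  shows "\<exists>b>t. \<forall>u. t \<le> u \<and> u < b \<longrightarrow> P u"
proof -
  obtain b where "b > t" "\<And>u. u > t \<Longrightarrow> u < b \<Longrightarrow> P u"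
    using assms(1) unfolding eventually_at_right_field by blast
  show ?thesis
  proof (intro exI[of _ b] conjI allI impI)
    show "b > t" by fact
    fix u assume u: "t \<le> u \<and> u < b"
    show "P u"
    proof (cases "u = t")
      case True then show ?thesis using assms(2) by simp
    next
      case False then show ?thesis using u \<open>\<And>u. u > t \<Longrightarrow> u < b \<Longrightarrow> P u\<close> by simp
    qed
  qed
qed

lemma before_T:
  fixes g :: "real \<Rightarrow> real"
  assumes pos: "g t > 0" and rc: "continuous (at_right t) g" and z: "\<And>u. u > T \<Longrightarrow> g u = 0"
  shows "t < T"
proof (rule ccontr)
  assume "\<not> t < T"
  then have ev: "eventually (\<lambda>u. g u = (\<lambda>_. 0) u) (at_right t)"
    unfolding eventually_at_right_field using z by (intro exI[of _ "t+1"]) auto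
  have "(g \<longlongrightarrow> g t) (at_right t)" using rc by (simp add: continuous_within)
  then have "((\<lambda>_. 0::real) \<longlongrightarrow> g t) (at_right t)" using tendsto_cong[OF ev] by simp
  moreover have "((\<lambda>_. 0::real) \<longlongrightarrow> 0) (at_right t)" by simp
  ultimately have "g t = 0" by (intro tendsto_unique[of "at_right t"]) auto
  then show False using pos by simp
qed

lemma core:
  fixes f :: "real^'m::finite \<Rightarrow> real"
    and B :: "real \<Rightarrow> real"
    and s ds :: "'m \<Rightarrow> real \<Rightarrow> real \<Rightarrow> real"
    and x :: "'m \<Rightarrow> real"
    and th :: "'m \<Rightarrow> real \<Rightarrow> real"
    and T :: "real^'m"
  assumes x_pos: "\<And>i. x i > 0"
    and speedup: "speedup_ok s ds"
    and f_mono: "\<And>U i a. a > U $ i \<Longrightarrow> f U < f (\<chi> k. if k = i then a else U $ k)"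
    and opt: "optimal f B s x th T"
    and ij: "i \<noteq> j" and t1: "t1 > 0" and t2: "t2 > 0"
    and p: "th i t1 > 0" "th j t1 > 0" "th i t2 > 0" "th j t2 > 0"
    and rat: "ds i (th i t2) t2 / ds j (th j t2) t2 < ds i (th i t1) t1 / ds j (th j t1) t1"
  shows False
proof -
  have feas: "feasible B s x th T" and best: "\<And>th' T'. feasible B s x th' T' \<Longrightarrow> f T \<le> f T'"
    using opt unfolding optimal_def by auto
  have th_nn: "\<And>k t. t \<ge> 0 \<Longrightarrow> th k t \<ge> 0 \<and> continuous (at_right t) (th k)"
    and th_sum: "\<And>t. t > 0 \<Longrightarrow> (\<Sum>k\<in>UNIV. th k t) \<le> B t"
    and th_int: "\<And>k \<tau>. \<tau> \<ge> 0 \<Longrightarrow> (\<lambda>t. s k (th k t) t) integrable_on {0..\<tau>}"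
    and th_T0: "\<And>k. T $ k \<ge> 0" and th_Tx: "\<And>k. service s th k 0 (T $ k) = x k"
    and th_Tz: "\<And>k t. t > T $ k \<Longrightarrow> th k t = 0"
    using feas unfolding feasible_def by auto
  have s0: "\<And>k t. t \<ge> 0 \<Longrightarrow> s k 0 t = 0" using speedup unfolding speedup_ok_def by auto
  have smono: "\<And>k t p q. t \<ge> 0 \<Longrightarrow> 0 \<le> p \<Longrightarrow> p \<le> q \<Longrightarrow> s k p t \<le> s k q t"
  proof -
    fix k and t p q :: real assume "t \<ge> 0" "0 \<le> p" "p \<le> q"
    moreover have "strict_mono_on {0..} (\<lambda>th. s k th t)" using speedup \<open>t \<ge> 0\<close> unfolding speedup_ok_def by auto
    ultimately show "s k p t \<le> s k q t" using strict_mono_on_leD[of "{0..}" "\<lambda>th. s k th t" p q] by auto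
  qed
  have sder: "\<And>k t \<theta>. t \<ge> 0 \<Longrightarrow> \<theta> \<ge> 0 \<Longrightarrow> ((\<lambda>y. s k y t) has_real_derivative ds k \<theta> t) (at \<theta> within {0..})"
    using speedup unfolding speedup_ok_def by auto
  have src: "\<And>k t \<theta>. t \<ge> 0 \<Longrightarrow> \<theta> \<ge> 0 \<Longrightarrow> continuous (at_right t) (\<lambda>u. s k \<theta> u)"
    using speedup unfolding speedup_ok_def by auto
  define a where "a = th i t1"
  define b where "b = th j t1"
  define a2 where "a2 = th i t2"
  define b2 where "b2 = th j t2"
  have pos: "a > 0" "b > 0" "a2 > 0" "b2 > 0" using p by (auto simp: a_def b_def a2_def b2_def)
  have dpos: "ds i a t1 > 0" "ds j b t1 > 0" "ds i a2 t2 > 0" "ds j b2 t2 > 0"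
    using ds_pos[OF speedup] t1 t2 pos by (auto intro!: ds_pos[OF speedup])
  have ratio: "ds i a t1 * ds j b2 t2 > ds i a2 t2 * ds j b t1"
    using rat dpos unfolding a_def b_def a2_def b2_def[symmetric] by (simp add: field_simps)
  obtain \<Delta> \<gamma> \<Delta>2 where ch: "\<Delta> > 0" "\<gamma> > 0" "\<Delta>2 > 0" "b - 3*\<gamma> - \<Delta> \<ge> 0" "a2 - 3*\<gamma> - \<Delta>2 \<ge> 0"
     "s i (a+\<gamma>+\<Delta>) t1 - s i (a+\<gamma>) t1 > s i (a2+\<gamma>) t2 - s i (a2-3*\<gamma>-\<Delta>2) t2"
     "s j (b2+\<gamma>+\<Delta>2) t2 - s j (b2+\<gamma>) t2 > s j (b+\<gamma>) t1 - s j (b-3*\<gamma>-\<Delta>) t1"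
    using choice_lemma[OF sder[of t1 a i] sder[of t2 a2 i] sder[of t1 b j] sder[of t2 b2 j]] pos dpos ratio t1 t2
    by auto
  define A1 where "A1 = a+\<gamma>+\<Delta>"
  define C1 where "C1 = b-3*\<gamma>-\<Delta>"
  define C2 where "C2 = a2-3*\<gamma>-\<Delta>2"
  define A2 where "A2 = b2+\<gamma>+\<Delta>2"
  have nnc: "A1 \<ge> 0" "C1 \<ge> 0" "C2 \<ge> 0" "A2 \<ge> 0" "a+\<gamma> \<ge> 0" "b+\<gamma> \<ge> 0" "a2+\<gamma> \<ge> 0" "b2+\<gamma> \<ge> 0"
    using ch pos by (auto simp: A1_def C1_def C2_def A2_def)
  define G1 where "G1 = s i A1 t1 - s i (a+\<gamma>) t1"
  define L2 where "L2 = s i (a2+\<gamma>) t2 - s i C2 t2"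
  define G2 where "G2 = s j A2 t2 - s j (b2+\<gamma>) t2"
  define L1 where "L1 = s j (b+\<gamma>) t1 - s j C1 t1"
  have GL: "G1 > L2" "G2 > L1" using ch(6,7) by (auto simp: G1_def L2_def G2_def L1_def A1_def C1_def C2_def A2_def)
  define \<kappa> where "\<kappa> = min (G1 - L2) (G2 - L1) / 8"
  have ka: "\<kappa> > 0" "8 * \<kappa> \<le> G1 - L2" "8 * \<kappa> \<le> G2 - L1" using GL by (auto simp: \<kappa>_def)
  have t1' : "t1 \<ge> 0" and t2': "t2 \<ge> 0" using t1 t2 by auto
  define W1 where "W1 u \<longleftrightarrow> \<bar>th i u - a\<bar> < \<gamma> \<and> \<bar>th j u - b\<bar> < \<gamma> \<and> \<bar>s i A1 u - s i A1 t1\<bar> < \<kappa> \<and>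
      \<bar>s i (a+\<gamma>) u - s i (a+\<gamma>) t1\<bar> < \<kappa> \<and> \<bar>s j C1 u - s j C1 t1\<bar> < \<kappa> \<and> \<bar>s j (b+\<gamma>) u - s j (b+\<gamma>) t1\<bar> < \<kappa>" for u
  define W2 where "W2 u \<longleftrightarrow> \<bar>th i u - a2\<bar> < \<gamma> \<and> \<bar>th j u - b2\<bar> < \<gamma> \<and> \<bar>s i C2 u - s i C2 t2\<bar> < \<kappa> \<and>
      \<bar>s i (a2+\<gamma>) u - s i (a2+\<gamma>) t2\<bar> < \<kappa> \<and> \<bar>s j A2 u - s j A2 t2\<bar> < \<kappa> \<and> \<bar>s j (b2+\<gamma>) u - s j (b2+\<gamma>) t2\<bar> < \<kappa>" for u
  have evW1: "eventually W1 (at_right t1)" unfolding W1_def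
  proof (intro eventually_conj)
    show "eventually (\<lambda>u. \<bar>th i u - a\<bar> < \<gamma>) (at_right t1)" unfolding a_def by (rule rc_ev[OF th_nn[OF t1', THEN conjunct2] ch(2)])
    show "eventually (\<lambda>u. \<bar>th j u - b\<bar> < \<gamma>) (at_right t1)" unfolding b_def by (rule rc_ev[OF th_nn[OF t1', THEN conjunct2] ch(2)])
    show "eventually (\<lambda>u. \<bar>s i A1 u - s i A1 t1\<bar> < \<kappa>) (at_right t1)" by (rule rc_ev[OF src[OF t1' nnc(1)] ka(1)])
    show "eventually (\<lambda>u. \<bar>s i (a+\<gamma>) u - s i (a+\<gamma>) t1\<bar> < \<kappa>) (at_right t1)" by (rule rc_ev[OF src[OF t1' nnc(5)] ka(1)])
    show "eventually (\<lambda>u. \<bar>s j C1 u - s j C1 t1\<bar> < \<kappa>) (at_right t1)" by (rule rc_ev[OF src[OF t1' nnc(2)] ka(1)])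
    show "eventually (\<lambda>u. \<bar>s j (b+\<gamma>) u - s j (b+\<gamma>) t1\<bar> < \<kappa>) (at_right t1)" by (rule rc_ev[OF src[OF t1' nnc(6)] ka(1)])
  qed
  have evW2: "eventually W2 (at_right t2)" unfolding W2_def
  proof (intro eventually_conj)
    show "eventually (\<lambda>u. \<bar>th i u - a2\<bar> < \<gamma>) (at_right t2)" unfolding a2_def by (rule rc_ev[OF th_nn[OF t2', THEN conjunct2] ch(2)])
    show "eventually (\<lambda>u. \<bar>th j u - b2\<bar> < \<gamma>) (at_right t2)" unfolding b2_def by (rule rc_ev[OF th_nn[OF t2', THEN conjunct2] ch(2)])
    show "eventually (\<lambda>u. \<bar>s i C2 u - s i C2 t2\<bar> < \<kappa>) (at_right t2)" by (rule rc_ev[OF src[OF t2' nnc(3)] ka(1)])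
    show "eventually (\<lambda>u. \<bar>s i (a2+\<gamma>) u - s i (a2+\<gamma>) t2\<bar> < \<kappa>) (at_right t2)" by (rule rc_ev[OF src[OF t2' nnc(7)] ka(1)])
    show "eventually (\<lambda>u. \<bar>s j A2 u - s j A2 t2\<bar> < \<kappa>) (at_right t2)" by (rule rc_ev[OF src[OF t2' nnc(4)] ka(1)])
    show "eventually (\<lambda>u. \<bar>s j (b2+\<gamma>) u - s j (b2+\<gamma>) t2\<bar> < \<kappa>) (at_right t2)" by (rule rc_ev[OF src[OF t2' nnc(8)] ka(1)])
  qed
  have "W1 t1" using ch ka by (simp add: W1_def a_def b_def)
  then obtain e1 where e1: "e1 > t1" "\<And>u. t1 \<le> u \<and> u < e1 \<Longrightarrow> W1 u"
    using rc_window[OF evW1] by blast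
  have "W2 t2" using ch ka by (simp add: W2_def a2_def b2_def)
  then obtain e2 where e2: "e2 > t2" "\<And>u. t2 \<le> u \<and> u < e2 \<Longrightarrow> W2 u"
    using rc_window[OF evW2] by blast
  have bT1: "t1 < T$i" by (rule before_T[OF p(1) th_nn[OF t1', THEN conjunct2] th_Tz])
  have bT2: "t1 < T$j" by (rule before_T[OF p(2) th_nn[OF t1', THEN conjunct2] th_Tz])
  have bT3: "t2 < T$i" by (rule before_T[OF p(3) th_nn[OF t2', THEN conjunct2] th_Tz])
  have bT4: "t2 < T$j" by (rule before_T[OF p(4) th_nn[OF t2', THEN conjunct2] th_Tz])
  note bT = bT1 bT2 bT3 bT4
  have tne: "t1 \<noteq> t2"
  proof
    assume "t1 = t2" then show False using rat by simp
  qed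
  define \<delta> where "\<delta> = min (min ((e1 - t1)/2) ((e2 - t2)/2)) (min (\<bar>t1 - t2\<bar>/2) (min (min (T$i - t1) (T$j - t1)) (min (T$i - t2) (T$j - t2))))"
  have dle: "\<delta> \<le> (e1 - t1)/2" "\<delta> \<le> (e2 - t2)/2" "\<delta> \<le> \<bar>t1 - t2\<bar>/2" "\<delta> \<le> T$i - t1" "\<delta> \<le> T$j - t1"
     "\<delta> \<le> T$i - t2" "\<delta> \<le> T$j - t2"
    unfolding \<delta>_def by (meson min.coboundedI1 min.coboundedI2 order_refl)+
  have "\<bar>t1 - t2\<bar> > 0" using tne by simp
  then have dpos: "\<delta> > 0" using e1 e2 bT unfolding \<delta>_def by simp
  have disj: "t1 + \<delta> < t2 \<or> t2 + \<delta> < t1"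
  proof (cases "t1 < t2")
    case True then have "\<bar>t1 - t2\<bar> = t2 - t1" by simp
    then show ?thesis using dle(3) True by simp
  next
    case False then have "\<bar>t1 - t2\<bar> = t1 - t2" by simp
    then show ?thesis using dle(3) False tne by simp
  qed
  have dl: "\<delta> > 0" "t1 + \<delta> < e1" "t2 + \<delta> < e2" "t1 + \<delta> < t2 \<or> t2 + \<delta> < t1"
     "t1 + \<delta> \<le> T$i" "t1 + \<delta> \<le> T$j" "t2 + \<delta> \<le> T$i" "t2 + \<delta> \<le> T$j"
    using dpos dle disj e1 e2 by simp_all
  have W1c: "W1 u" if "u \<in> {t1..t1+\<delta>}" for u using e1(2)[of u] dl(2) that by simp
  have W2c: "W2 u" if "u \<in> {t2..t2+\<delta>}" for u using e2(2)[of u] dl(3) that by simp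
  define th' where "th' k u = (if k = i then (if u \<in> {t1..<t1+\<delta>} then A1 else if u \<in> {t2..<t2+\<delta>} then C2 else th i u)
     else if k = j then (if u \<in> {t1..<t1+\<delta>} then C1 else if u \<in> {t2..<t2+\<delta>} then A2 else th j u) else th k u)" for k u
  have th'i: "th' i = (\<lambda>u. if u \<in> {t1..<t1+\<delta>} then A1 else if u \<in> {t2..<t2+\<delta>} then C2 else th i u)"
    by (rule ext) (simp add: th'_def)
  have th'j: "th' j = (\<lambda>u. if u \<in> {t1..<t1+\<delta>} then C1 else if u \<in> {t2..<t2+\<delta>} then A2 else th j u)"
    by (rule ext) (use ij in \<open>simp add: th'_def\<close>)
  have th'k: "k \<noteq> i \<Longrightarrow> k \<noteq> j \<Longrightarrow> th' k = th k" for k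
    by (rule ext) (simp add: th'_def)
  have Ii: "(\<lambda>u. s i (th' i u) u) = (\<lambda>u. if u \<in> {t1..<t1+\<delta>} then s i A1 u else if u \<in> {t2..<t2+\<delta>} then s i C2 u else s i (th i u) u)"
    unfolding th'i by (rule ext) simp
  have Ij: "(\<lambda>u. s j (th' j u) u) = (\<lambda>u. if u \<in> {t1..<t1+\<delta>} then s j C1 u else if u \<in> {t2..<t2+\<delta>} then s j A2 u else s j (th j u) u)"
    unfolding th'j by (rule ext) simp
  have iA1: "(\<lambda>u. s i A1 u) integrable_on {t1..t1+\<delta>}"
  proof (rule rc_integrable[where M="\<bar>s i A1 t1\<bar> + \<kappa>"])
    fix u assume u: "u \<in> {t1..t1+\<delta>}"
    show "continuous (at_right u) (\<lambda>u. s i A1 u)" using src[of u A1 i] u t1 nnc by simp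
    have "\<bar>s i A1 u - s i A1 t1\<bar> < \<kappa>" using W1c[OF u] by (simp add: W1_def)
    then show "\<bar>s i A1 u\<bar> \<le> \<bar>s i A1 t1\<bar> + \<kappa>" by linarith
  qed
  have iC2: "(\<lambda>u. s i C2 u) integrable_on {t2..t2+\<delta>}"
  proof (rule rc_integrable[where M="\<bar>s i C2 t2\<bar> + \<kappa>"])
    fix u assume u: "u \<in> {t2..t2+\<delta>}"
    show "continuous (at_right u) (\<lambda>u. s i C2 u)" using src[of u C2 i] u t2 nnc by simp
    have "\<bar>s i C2 u - s i C2 t2\<bar> < \<kappa>" using W2c[OF u] by (simp add: W2_def)
    then show "\<bar>s i C2 u\<bar> \<le> \<bar>s i C2 t2\<bar> + \<kappa>" by linarith
  qed
  have iC1: "(\<lambda>u. s j C1 u) integrable_on {t1..t1+\<delta>}"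
  proof (rule rc_integrable[where M="\<bar>s j C1 t1\<bar> + \<kappa>"])
    fix u assume u: "u \<in> {t1..t1+\<delta>}"
    show "continuous (at_right u) (\<lambda>u. s j C1 u)" using src[of u C1 j] u t1 nnc by simp
    have "\<bar>s j C1 u - s j C1 t1\<bar> < \<kappa>" using W1c[OF u] by (simp add: W1_def)
    then show "\<bar>s j C1 u\<bar> \<le> \<bar>s j C1 t1\<bar> + \<kappa>" by linarith
  qed
  have iA2: "(\<lambda>u. s j A2 u) integrable_on {t2..t2+\<delta>}"
  proof (rule rc_integrable[where M="\<bar>s j A2 t2\<bar> + \<kappa>"])
    fix u assume u: "u \<in> {t2..t2+\<delta>}"
    show "continuous (at_right u) (\<lambda>u. s j A2 u)" using src[of u A2 j] u t2 nnc by simp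
    have "\<bar>s j A2 u - s j A2 t2\<bar> < \<kappa>" using W2c[OF u] by (simp add: W2_def)
    then show "\<bar>s j A2 u\<bar> \<le> \<bar>s j A2 t2\<bar> + \<kappa>" by linarith
  qed
  have low_i1: "s i A1 u - s i (th i u) u \<ge> G1 - 2*\<kappa>" if "u \<in> {t1..t1+\<delta>}" for u
  proof -
    have u0: "u \<ge> 0" using that t1 by auto
    have w: "W1 u" using W1c that by blast
    have "\<bar>th i u - a\<bar> < \<gamma>" using w by (simp add: W1_def)
    then have "th i u \<le> a+\<gamma>" by (simp add: abs_less_iff)
    then have "s i (th i u) u \<le> s i (a+\<gamma>) u" by (rule smono[OF u0 th_nn[OF u0, THEN conjunct1]])
    then show ?thesis using w unfolding W1_def G1_def by linarith
  qed
  have low_i2: "s i C2 u - s i (th i u) u \<ge> -(L2 + 2*\<kappa>)" if "u \<in> {t2..t2+\<delta>}" for u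
  proof -
    have u0: "u \<ge> 0" using that t2 by auto
    have w: "W2 u" using W2c that by blast
    have "\<bar>th i u - a2\<bar> < \<gamma>" using w by (simp add: W2_def)
    then have "th i u \<le> a2+\<gamma>" by (simp add: abs_less_iff)
    then have "s i (th i u) u \<le> s i (a2+\<gamma>) u" by (rule smono[OF u0 th_nn[OF u0, THEN conjunct1]])
    then show ?thesis using w unfolding W2_def L2_def by linarith
  qed
  have low_j1: "s j C1 u - s j (th j u) u \<ge> -(L1 + 2*\<kappa>)" if "u \<in> {t1..t1+\<delta>}" for u
  proof -
    have u0: "u \<ge> 0" using that t1 by auto
    have w: "W1 u" using W1c that by blast
    have "\<bar>th j u - b\<bar> < \<gamma>" using w by (simp add: W1_def)
    then have "th j u \<le> b+\<gamma>" by (simp add: abs_less_iff)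
    then have "s j (th j u) u \<le> s j (b+\<gamma>) u" by (rule smono[OF u0 th_nn[OF u0, THEN conjunct1]])
    then show ?thesis using w unfolding W1_def L1_def by linarith
  qed
  have low_j2: "s j A2 u - s j (th j u) u \<ge> G2 - 2*\<kappa>" if "u \<in> {t2..t2+\<delta>}" for u
  proof -
    have u0: "u \<ge> 0" using that t2 by auto
    have w: "W2 u" using W2c that by blast
    have "\<bar>th j u - b2\<bar> < \<gamma>" using w by (simp add: W2_def)
    then have "th j u \<le> b2+\<gamma>" by (simp add: abs_less_iff)
    then have "s j (th j u) u \<le> s j (b2+\<gamma>) u" by (rule smono[OF u0 th_nn[OF u0, THEN conjunct1]])
    then show ?thesis using w unfolding W2_def G2_def by linarith
  qed
  have Oi: "\<And>\<tau>. \<tau> \<ge> 0 \<Longrightarrow> (\<lambda>u. s i (th i u) u) integrable_on {0..\<tau>}" using th_int by blast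
  have Oj: "\<And>\<tau>. \<tau> \<ge> 0 \<Longrightarrow> (\<lambda>u. s j (th j u) u) integrable_on {0..\<tau>}" using th_int by blast
  have Oi': "\<forall>\<tau>\<ge>0. (\<lambda>u. s i (th i u) u) integrable_on {0..\<tau>}" using Oi by blast
  have Oj': "\<forall>\<tau>\<ge>0. (\<lambda>u. s j (th j u) u) integrable_on {0..\<tau>}" using Oj by blast
  have li1: "\<forall>u\<in>{t1..t1+\<delta>}. s i A1 u - s i (th i u) u \<ge> G1 - 2*\<kappa>" using low_i1 by blast
  have li2: "\<forall>u\<in>{t2..t2+\<delta>}. s i C2 u - s i (th i u) u \<ge> -(L2 + 2*\<kappa>)" using low_i2 by blast
  have lj1: "\<forall>u\<in>{t1..t1+\<delta>}. s j C1 u - s j (th j u) u \<ge> -(L1 + 2*\<kappa>)" using low_j1 by blast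
  have lj2: "\<forall>u\<in>{t2..t2+\<delta>}. s j A2 u - s j (th j u) u \<ge> G2 - 2*\<kappa>" using low_j2 by blast
  note jgi = job_gain[OF Oi' iA1 iC2 t1' t2' dl(1) dl(4) dl(5) dl(7) li1 li2]
  note jgj = job_gain[OF Oj' iC1 iA2 t1' t2' dl(1) dl(4) dl(6) dl(8) lj1 lj2]
  have int': "(\<lambda>t. s k (th' k t) t) integrable_on {0..\<tau>}" if "\<tau> \<ge> 0" for k \<tau>
  proof -
    consider "k = i" | "k = j" | "k \<noteq> i \<and> k \<noteq> j" by blast
    then show ?thesis
    proof cases
      case 1 then show ?thesis using jgi(1)[OF that] Ii by simp
    next
      case 2 then show ?thesis using jgj(1)[OF that] Ij by simp
    next
      case 3 then show ?thesis using th_int[OF that, of k] th'k[of k] by simp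
    qed
  qed
  have serv_i: "service s th' i 0 (T$i) > x i"
  proof -
    have "service s th' i 0 (T$i) \<ge> x i + \<delta> * (G1 - 2*\<kappa>) + \<delta> * (-(L2 + 2*\<kappa>))"
      using jgi(2) th_Tx[of i] unfolding service_def Ii by simp
    moreover have "\<delta> * (G1 - 2*\<kappa>) + \<delta> * (-(L2 + 2*\<kappa>)) = \<delta> * (G1 - L2 - 4*\<kappa>)" by (simp add: algebra_simps)
    moreover have "\<delta> * (G1 - L2 - 4*\<kappa>) > 0" using dl(1) ka by (intro mult_pos_pos) auto
    ultimately show ?thesis by linarith
  qed
  have serv_j: "service s th' j 0 (T$j) > x j"
  proof -
    have "service s th' j 0 (T$j) \<ge> x j + \<delta> * (-(L1 + 2*\<kappa>)) + \<delta> * (G2 - 2*\<kappa>)"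
      using jgj(2) th_Tx[of j] unfolding service_def Ij by simp
    moreover have "\<delta> * (-(L1 + 2*\<kappa>)) + \<delta> * (G2 - 2*\<kappa>) = \<delta> * (G2 - L1 - 4*\<kappa>)" by (simp add: algebra_simps)
    moreover have "\<delta> * (G2 - L1 - 4*\<kappa>) > 0" using dl(1) ka by (intro mult_pos_pos) auto
    ultimately show ?thesis by linarith
  qed
  have serv: "service s th' k 0 (T$k) \<ge> x k" for k
  proof -
    consider "k = i" | "k = j" | "k \<noteq> i \<and> k \<noteq> j" by blast
    then show ?thesis
    proof cases
      case 1 then show ?thesis using serv_i by simp
    next
      case 2 then show ?thesis using serv_j by simp
    next
      case 3 then show ?thesis using th_Tx[of k] th'k[of k] by (simp add: service_def)
    qed
  qed
  have nn': "th' k t \<ge> 0 \<and> continuous (at_right t) (th' k)" if "t \<ge> 0" for k t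
  proof -
    consider "k = i" | "k = j" | "k \<noteq> i \<and> k \<noteq> j" by blast
    then show ?thesis
    proof cases
      case 1
      have "continuous (at_right t) (th' i)" unfolding th'i
        by (intro rc_if continuous_const th_nn[OF that, THEN conjunct2])
      then show ?thesis using 1 nnc th_nn[OF that] by (simp add: th'_def)
    next
      case 2
      have "continuous (at_right t) (th' j)" unfolding th'j
        by (intro rc_if continuous_const th_nn[OF that, THEN conjunct2])
      then show ?thesis using 2 ij nnc th_nn[OF that] by (simp add: th'_def)
    next
      case 3 then show ?thesis using th_nn[OF that, of k] th'k[of k] by simp
    qed
  qed
  have sum': "(\<Sum>k\<in>UNIV. th' k t) \<le> B t" if "t > 0" for t
  proof -
    have pair: "th' i t + th' j t \<le> th i t + th j t"
    proof (cases "t \<in> {t1..<t1+\<delta>}")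
      case True
      then have "W1 t" using W1c by auto
      then show ?thesis using True ij unfolding th'_def W1_def A1_def C1_def by auto
    next
      case False
      show ?thesis
      proof (cases "t \<in> {t2..<t2+\<delta>}")
        case True
        then have "W2 t" using W2c by auto
        then show ?thesis using True False ij unfolding th'_def W2_def A2_def C2_def by auto
      next
        case False2: False
        then show ?thesis using False ij unfolding th'_def by auto
      qed
    qed
    have "(\<Sum>k\<in>UNIV. th' k t - th k t) = (\<Sum>k\<in>{i,j}. th' k t - th k t)"
      by (rule sum.mono_neutral_right) (auto simp: th'_def)
    also have "\<dots> = (th' i t - th i t) + (th' j t - th j t)" using ij by simp
    finally have "(\<Sum>k\<in>UNIV. th' k t) - (\<Sum>k\<in>UNIV. th k t) = (th' i t - th i t) + (th' j t - th j t)"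
      by (simp add: sum_subtractf)
    then show ?thesis using pair th_sum[OF that] by linarith
  qed
  have "\<exists>\<phi>' T'. feasible B s x \<phi>' T' \<and> (\<forall>k. T'$k \<le> T$k \<and> (service s th' k 0 (T$k) > x k \<longrightarrow> T'$k < T$k))"
  proof (rule truncate[where \<phi>=th'])
    show "\<And>k t. t \<ge> 0 \<Longrightarrow> s k 0 t = 0" by (rule s0)
    show "\<And>k t. t \<ge> 0 \<Longrightarrow> th' k t \<ge> 0 \<and> continuous (at_right t) (th' k)" by (rule nn')
    show "\<And>t. t > 0 \<Longrightarrow> (\<Sum>k\<in>UNIV. th' k t) \<le> B t" by (rule sum')
    show "\<And>k \<tau>. \<tau> \<ge> 0 \<Longrightarrow> (\<lambda>t. s k (th' k t) t) integrable_on {0..\<tau>}" by (rule int')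
    show "\<And>k. T $ k \<ge> 0" by (rule th_T0)
    show "\<And>k. service s th' k 0 (T$k) \<ge> x k" by (rule serv)
    show "\<And>k. x k > 0" by (rule x_pos)
  qed
  then obtain \<phi>' T' where fe': "feasible B s x \<phi>' T'"
    and TT: "\<forall>k. T'$k \<le> T$k \<and> (service s th' k 0 (T$k) > x k \<longrightarrow> T'$k < T$k)"
    by blast
  have "f T' < f T"
  proof (rule f_strict[OF f_mono, of T' T i])
    show "\<And>k. T' $ k \<le> T $ k" using TT by blast
    show "T' $ i < T $ i" using TT serv_i by blast
  qed
  moreover have "f T \<le> f T'" by (rule best[OF fe'])
  ultimately show False by simp
qed

theorem mainTheorem11:
  fixes f :: "real^'m::finite \<Rightarrow> real"
    and B :: "real \<Rightarrow> real"
    and s ds :: "'m \<Rightarrow> real \<Rightarrow> real \<Rightarrow> real"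
    and x :: "'m \<Rightarrow> real"
    and th :: "'m \<Rightarrow> real \<Rightarrow> real"
    and T :: "real^'m"
  assumes x_pos: "\<And>i. x i > 0"
    and B_pos: "\<And>t. t \<ge> 0 \<Longrightarrow> B t > 0"
    and B_rc: "\<And>t. t \<ge> 0 \<Longrightarrow> continuous (at_right t) B"
    and speedup: "speedup_ok s ds"
    and f_cont: "continuous_on UNIV f"
    and f_mono: "\<And>U i a. a > U $ i \<Longrightarrow> f U < f (\<chi> k. if k = i then a else U $ k)"
    and opt: "optimal f B s x th T"
  shows "\<forall>i j. \<exists>c. \<forall>t>0. th i t > 0 \<and> th j t > 0 \<longrightarrow>
           ds i (th i t) t / ds j (th j t) t = c"
proof (intro allI)
  fix i j
  show "\<exists>c. \<forall>t>0. th i t > 0 \<and> th j t > 0 \<longrightarrow> ds i (th i t) t / ds j (th j t) t = c"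
  proof (cases "\<exists>t0>0. th i t0 > 0 \<and> th j t0 > 0")
    case False then show ?thesis by blast
  next
    case True
    then obtain t0 where t0: "t0 > 0" "th i t0 > 0" "th j t0 > 0" by blast
    show ?thesis
    proof (intro exI[of _ "ds i (th i t0) t0 / ds j (th j t0) t0"] allI impI)
      fix t :: real assume t: "t > 0" and pt: "th i t > 0 \<and> th j t > 0"
      show "ds i (th i t) t / ds j (th j t) t = ds i (th i t0) t0 / ds j (th j t0) t0"
      proof (cases "i = j")
        case True
        have "ds i (th i t) t > 0" "ds i (th i t0) t0 > 0"
          using ds_pos[OF speedup] t t0 pt by auto
        then show ?thesis using True by simp
      next
        case False
        show ?thesis
        proof (rule linorder_cases[of "ds i (th i t) t / ds j (th j t) t" "ds i (th i t0) t0 / ds j (th j t0) t0"])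
          assume "ds i (th i t) t / ds j (th j t) t < ds i (th i t0) t0 / ds j (th j t0) t0"
          then show ?thesis
            using core[OF x_pos speedup f_mono opt False t0(1) t t0(2,3)] pt by blast
        next
          assume "ds i (th i t) t / ds j (th j t) t > ds i (th i t0) t0 / ds j (th j t0) t0"
          then show ?thesis
            using core[OF x_pos speedup f_mono opt False t t0(1) _ _ t0(2,3)] pt by blast
        qed
      qed
    qed
  qed
qed

end
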